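(* Let $d$ and $m$ be integers, $0<\epsilon\le 1$ a real number, and $0<\delta<1$. There is a non-adaptive randomized group testing algorithm that makes $O((1/\epsilon^2)\log(1/\delta))$ tests and: if $d<m$ then, with probability at least $1-\delta$, it returns $0$; if $d>(1+\epsilon)m$ then, with probability at least $1-\delta$, it returns $1$; if $m\le d\le(1+\epsilon)m$ it returns $0$ or $1$. Here $d$ is the (unknown) number of defective items.
   Context: Group testing: items $X=[n]$, unknown defective set $I\subseteq X$ with $d=|I|$. A test $Q\subseteq X$ has answer $1$ if $Q\cap I\neq\emptyset$ and $0$ otherwise. A non-adaptive (randomized) algorithm chooses all its tests before seeing any answer, then computes its output from the answers. Logarithms are base 2. *)

theory Defs
  imports "HOL-Probability.Probability"
begin

(* Items are X = {1..n}. A test is a set Q of items; its answer on defective set I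
   is True (=1) iff Q \<inter> I \<noteq> {}. *)
definition answers :: "nat set \<Rightarrow> nat set list \<Rightarrow> bool list" where
  "answers I Qs = map (\<lambda>Q. Q \<inter> I \<noteq> {}) Qs"

(* A non-adaptive randomized algorithm is a probability distribution over pairs
   (Qs, f): the list of tests Qs (chosen before any answer is seen) and the decision
   function f computing the output from the answer vector. Output True means 1,
   False means 0. *)
type_synonym nonadaptive_alg = "(nat set list \<times> (bool list \<Rightarrow> bool)) pmf"

definition valid_alg :: "nat \<Rightarrow> nonadaptive_alg \<Rightarrow> bool" where
  "valid_alg n A \<longleftrightarrow> (\<forall>(Qs, f) \<in> set_pmf A. \<forall>Q \<in> set Qs. Q \<subseteq> {1..n})"

definition run_alg :: "nonadaptive_alg \<Rightarrow> nat set \<Rightarrow> bool pmf" where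
  "run_alg A I = map_pmf (\<lambda>(Qs, f). f (answers I Qs)) A"

end

theory Submission
  imports Defs
begin

definition T :: "nat \<Rightarrow> real \<Rightarrow> nat set pmf" where
  "T n p = map_pmf (\<lambda>h. {i\<in>{1..n}. h i}) (Pi_pmf {1..n} False (\<lambda>_. bernoulli_pmf p))"

lemma T_sub: "Q \<in> set_pmf (T n p) \<Longrightarrow> Q \<subseteq> {1..n}"
  unfolding T_def by auto

lemma T_event:
  assumes I: "I \<subseteq> {1..n}" and p: "0 \<le> p" "p \<le> 1"
  shows "measure_pmf.prob (T n p) {Q. Q \<inter> I = {}} = (1-p)^card I"
proof -
  have "measure_pmf.prob (T n p) {Q. Q \<inter> I = {}} =
     measure_pmf.prob (Pi_pmf {1..n} False (\<lambda>_. bernoulli_pmf p))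
        (Pi {1..n} (\<lambda>x. if x \<in> I then {False} else UNIV))"
    unfolding T_def measure_map_pmf
  proof (rule arg_cong[where f="measure_pmf.prob _"])
    show "(\<lambda>h. {i \<in> {1..n}. h i}) -` {Q. Q \<inter> I = {}} =
        Pi {1..n} (\<lambda>x. if x \<in> I then {False} else UNIV)"
    proof (intro set_eqI iffI)
      fix h assume "h \<in> Pi {1..n} (\<lambda>x. if x \<in> I then {False} else UNIV)"
      then have "\<And>x. x \<in> I \<Longrightarrow> \<not> h x" using I by (force simp: Pi_def)
      then show "h \<in> (\<lambda>h. {i \<in> {1..n}. h i}) -` {Q. Q \<inter> I = {}}" by auto
    qed (use I in auto)
  qed
  also have "\<dots> = (\<Prod>x\<in>{1..n}. measure_pmf.prob (bernoulli_pmf p) (if x \<in> I then {False} else UNIV))"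
    by (rule measure_Pi_pmf_Pi) simp
  also have "\<dots> = (\<Prod>x\<in>{1..n}. if x \<in> I then 1 - p else 1)"
    by (rule prod.cong) (use p in \<open>auto simp: measure_pmf_single\<close>)
  also have "\<dots> = (1-p)^card I"
    using I by (simp add: prod.If_cases Int_absorb1)
  finally show ?thesis .
qed

lemma T_bern:
  assumes I: "I \<subseteq> {1..n}" and p: "0 \<le> p" "p \<le> 1"
  shows "map_pmf (\<lambda>Q. Q \<inter> I = {}) (T n p) = bernoulli_pmf ((1-p)^card I)"
proof (rule pmf_eqI)
  fix b :: bool
  have r: "0 \<le> (1-p)^card I" "(1-p)^card I \<le> 1" using p by (auto intro: power_le_one)
  show "pmf (map_pmf (\<lambda>Q. Q \<inter> I = {}) (T n p)) b = pmf (bernoulli_pmf ((1 - p) ^ card I)) b"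
  proof (cases b)
    case True
    then show ?thesis using T_event[OF assms] r by (simp add: pmf_map vimage_def)
  next
    case False
    have "measure_pmf.prob (T n p) {Q. Q \<inter> I \<noteq> {}} = 1 - measure_pmf.prob (T n p) {Q. Q \<inter> I = {}}"
      using measure_pmf.prob_compl[of "{Q. Q \<inter> I = {}}" "T n p"]
      by (simp add: Compl_eq_Diff_UNIV[symmetric] Collect_neg_eq[symmetric])
    then show ?thesis using T_event[OF assms] r False by (simp add: pmf_map vimage_def)
  qed
qed

definition Alg :: "nat \<Rightarrow> real \<Rightarrow> nat \<Rightarrow> real \<Rightarrow> nonadaptive_alg" where
  "Alg n p k t = map_pmf (\<lambda>G. (map G [0..<k], \<lambda>bs. real (length (filter Not bs)) < t * k))
      (Pi_pmf {..<k} {} (\<lambda>_. T n p))"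

lemma Alg_valid: "valid_alg n (Alg n p k t)"
proof -
  have "G j \<subseteq> {1..n}" if G: "G \<in> set_pmf (Pi_pmf {..<k} {} (\<lambda>_. T n p))" and j: "j < k" for G j
  proof -
    have "G j \<in> set_pmf (T n p)" using G j by (auto simp: set_Pi_pmf PiE_dflt_def)
    then show ?thesis using T_sub by blast
  qed
  then show ?thesis unfolding valid_alg_def Alg_def by auto
qed

lemma Alg_len: "(Qs, f) \<in> set_pmf (Alg n p k t) \<Longrightarrow> length Qs = k"
  unfolding Alg_def by auto

lemma run_Alg:
  assumes I: "I \<subseteq> {1..n}" and p: "0 \<le> p" "p \<le> 1"
  shows "run_alg (Alg n p k t) I = map_pmf (\<lambda>c. real c < t * k) (binomial_pmf k ((1-p)^card I))"
proof -
  have r: "(1-p)^card I \<in> {0..1}" using p by (auto intro: power_le_one)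
  have cnt: "length (filter Not (answers I (map G [0..<k]))) = card {j\<in>{..<k}. G j \<inter> I = {}}" for G
    unfolding answers_def length_filter_conv_card by (auto intro!: arg_cong[where f=card])
  have "binomial_pmf k ((1-p)^card I) =
      map_pmf (\<lambda>f. card {x\<in>{..<k}. f x}) (Pi_pmf {..<k} True (\<lambda>_. bernoulli_pmf ((1-p)^card I)))"
    by (rule binomial_pmf_altdef') (use r in auto)
  also have "Pi_pmf {..<k} True (\<lambda>_. bernoulli_pmf ((1-p)^card I)) =
     Pi_pmf {..<k} True (\<lambda>_. map_pmf (\<lambda>Q. Q \<inter> I = {}) (T n p))"
    using T_bern[OF assms] by simp
  also have "\<dots> = map_pmf (\<lambda>h. (\<lambda>Q. Q \<inter> I = {}) \<circ> h) (Pi_pmf {..<k} {} (\<lambda>_. T n p))"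
    by (rule Pi_pmf_map) auto
  finally have b: "binomial_pmf k ((1-p)^card I) = map_pmf (\<lambda>G. card {j\<in>{..<k}. G j \<inter> I = {}}) (Pi_pmf {..<k} {} (\<lambda>_. T n p))"
    by (simp add: pmf.map_comp o_def)
  show ?thesis
    unfolding run_alg_def Alg_def b by (simp add: pmf.map_comp o_def cnt)
qed


lemma tail_lo:
  assumes k: "k > 0" and r: "0 \<le> r" "r \<le> 1" and s: "s \<ge> 0" and t: "t \<le> r - s"
  shows "pmf (map_pmf (\<lambda>c. real c < t * k) (binomial_pmf k r)) False \<ge> 1 - exp (- 2 * real k * s^2)"
proof -
  interpret binomial_distribution k r using r by unfold_locales auto
  have "measure_pmf.prob (binomial_pmf k r) {c. real c < t * k} \<le>
        measure_pmf.prob (binomial_pmf k r) {x. x / k \<le> r - s}"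
  proof (rule measure_pmf.finite_measure_mono)
    show "{c. real c < t * k} \<subseteq> {x. real x / k \<le> r - s}"
    proof
      fix c assume "c \<in> {c. real c < t * k}"
      moreover have "t * k \<le> (r - s) * k" using t by (intro mult_right_mono) auto
      ultimately show "c \<in> {x. real x / k \<le> r - s}" using k by (auto simp: field_simps)
    qed
  qed auto
  also have "\<dots> \<le> exp (- 2 * real k * s^2)" using prob_le'[OF k s] by simp
  finally have 1: "measure_pmf.prob (binomial_pmf k r) {c. real c < t * k} \<le> exp (- 2 * real k * s^2)" .
  have "pmf (map_pmf (\<lambda>c. real c < t * k) (binomial_pmf k r)) False =
      measure_pmf.prob (binomial_pmf k r) (UNIV - {c. real c < t * k})"
    by (simp add: pmf_map vimage_def Diff_eq Compl_eq)
  also have "\<dots> = 1 - measure_pmf.prob (binomial_pmf k r) {c. real c < t * k}"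
    using measure_pmf.prob_compl[of _ "binomial_pmf k r"] by simp
  finally show ?thesis using 1 by linarith
qed

lemma tail_hi:
  assumes k: "k > 0" and r: "0 \<le> r" "r \<le> 1" and s: "s \<ge> 0" and t: "r + s \<le> t"
  shows "pmf (map_pmf (\<lambda>c. real c < t * k) (binomial_pmf k r)) True \<ge> 1 - exp (- 2 * real k * s^2)"
proof -
  interpret binomial_distribution k r using r by unfold_locales auto
  have "measure_pmf.prob (binomial_pmf k r) {c. \<not> real c < t * k} \<le>
        measure_pmf.prob (binomial_pmf k r) {x. x / k \<ge> r + s}"
  proof (rule measure_pmf.finite_measure_mono)
    show "{c. \<not> real c < t * k} \<subseteq> {x. real x / k \<ge> r + s}"
    proof
      fix c assume "c \<in> {c. \<not> real c < t * k}"
      moreover have "(r + s) * k \<le> t * k" using t by (intro mult_right_mono) auto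
      ultimately show "c \<in> {x. real x / k \<ge> r + s}" using k by (auto simp: field_simps)
    qed
  qed auto
  also have "\<dots> \<le> exp (- 2 * real k * s^2)" using prob_ge'[OF k s] by simp
  finally have 1: "measure_pmf.prob (binomial_pmf k r) {c. \<not> real c < t * k} \<le> exp (- 2 * real k * s^2)" .
  have "pmf (map_pmf (\<lambda>c. real c < t * k) (binomial_pmf k r)) True =
      measure_pmf.prob (binomial_pmf k r) (UNIV - {c. \<not> real c < t * k})"
    by (simp add: pmf_map vimage_def Diff_eq Compl_eq)
  also have "\<dots> = 1 - measure_pmf.prob (binomial_pmf k r) {c. \<not> real c < t * k}"
    using measure_pmf.prob_compl[of _ "binomial_pmf k r"] by simp
  finally show ?thesis using 1 by linarith
qed

lemma powr_eps: fixes e :: real assumes "0 \<le> e" "e \<le> 1" shows "(2::real) powr (- e) \<le> 1 - e/4"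
proof -
  have ln2: "ln (2::real) \<ge> 1/2" using ln_le_minus_one[of "1/2::real"] by (simp add: ln_div)
  have "(2::real) powr e = exp (e * ln 2)" by (simp add: powr_def mult.commute)
  also have "\<dots> \<ge> 1 + e * ln 2" by (rule exp_ge_add_one_self)
  finally have "(2::real) powr e \<ge> 1 + e * ln 2" .
  moreover have "e * ln 2 \<ge> e * (1/2)" by (rule mult_left_mono[OF ln2 assms(1)])
  ultimately have A: "(2::real) powr e \<ge> 1 + e/2" by linarith
  have "e * e \<le> 1 * e" by (rule mult_right_mono) (use assms in auto)
  hence B: "(1 - e/4) * (1 + e/2) \<ge> 1" using assms by (simp add: algebra_simps)
  have C: "(1 - e/4) * (1 + e/2) \<le> (1 - e/4) * 2 powr e"
    by (rule mult_left_mono[OF A]) (use assms in auto)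
  have "(1 - e/4) * 2 powr e \<ge> 1" using B C by linarith
  then show ?thesis by (simp add: powr_minus field_simps)
qed

lemma q_pow: assumes "M > 0" shows "(2 powr (-1/real M)) ^ d = (2::real) powr (- real d / M)"
  by (simp add: powr_realpow[symmetric] powr_powr)

lemma main_alg:
  fixes M :: nat and \<epsilon> \<delta> :: real
  assumes M: "M \<ge> 1" and e: "0 < \<epsilon>" "\<epsilon> \<le> 1" and dl: "0 < \<delta>" "\<delta> < 1/2"
  shows "\<exists>A::nonadaptive_alg. valid_alg n A \<and>
         (\<forall>(Qs, f) \<in> set_pmf A. real (length Qs) \<le> 129 * (1 / \<epsilon>^2) * log 2 (1 / \<delta>)) \<and>
         (\<forall>I. I \<subseteq> {1..n} \<longrightarrow>
            (int (card I) < int M \<longrightarrow> pmf (run_alg A I) False \<ge> 1 - \<delta>) \<and>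
            (real (card I) > (1 + \<epsilon>) * real_of_int (int M) \<longrightarrow> pmf (run_alg A I) True \<ge> 1 - \<delta>))"
proof -
  define L where "L = ln (1/\<delta>)"
  define k where "k = nat \<lceil>128 * L / \<epsilon>^2\<rceil>"
  define q where "q = (2::real) powr (-1/real M)"
  define p where "p = 1 - q"
  define t where "t = 1/2 - \<epsilon>/16"
  have L: "L > 0" using dl by (simp add: L_def)
  have k0: "k > 0" using L e by (simp add: k_def)
  have pos: "0 < 128 * L / \<epsilon>^2" using L e by simp
  have c0: "0 \<le> \<lceil>128 * L / \<epsilon>^2\<rceil>" using pos by linarith
  have kr: "real k = of_int \<lceil>128 * L / \<epsilon>^2\<rceil>" unfolding k_def using c0 by simp
  have kge: "real k \<ge> 128 * L / \<epsilon>^2" unfolding kr by simp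
  have kle: "real k \<le> 128 * L / \<epsilon>^2 + 1" unfolding kr using ceiling_correct[of "128 * L / \<epsilon>^2"] by linarith
  have lg: "log 2 (1/\<delta>) \<ge> 1" using dl by (simp add: le_log_iff le_divide_eq)
  have "L * ln 2 \<le> L * 1" using L ln_2_less_1 by (intro mult_left_mono) auto
  hence "L \<le> L / ln 2" by (simp add: le_divide_eq)
  hence Llg: "L \<le> log 2 (1/\<delta>)" by (simp add: log_def L_def)
  have ie: "1 / \<epsilon>^2 \<ge> 1" using e by (simp add: power_le_one)
  have "real k \<le> 128 * log 2 (1/\<delta>) / \<epsilon>^2 + log 2 (1/\<delta>) / \<epsilon>^2"
  proof -
    have "128 * L / \<epsilon>^2 \<le> 128 * log 2 (1/\<delta>) / \<epsilon>^2" using Llg e by (simp add: divide_right_mono)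
    moreover have "1 \<le> log 2 (1/\<delta>) / \<epsilon>^2"
    proof -
      have "\<epsilon>^2 \<le> 1" using e by (simp add: power_le_one)
      then show ?thesis using lg e by (simp add: le_divide_eq)
    qed
    ultimately show ?thesis using kle by linarith
  qed
  hence klen: "real k \<le> 129 * (1 / \<epsilon>^2) * log 2 (1 / \<delta>)" by (simp add: field_simps)
  have expd: "exp (- 2 * real k * (\<epsilon>/16)^2) \<le> \<delta>"
  proof -
    have "- 2 * real k * (\<epsilon>/16)^2 = - (real k * \<epsilon>^2 / 128)" by (simp add: power2_eq_square field_simps)
    also have "\<dots> \<le> - L" using kge e by (simp add: field_simps)
    finally have "exp (- 2 * real k * (\<epsilon>/16)^2) \<le> exp (- L)" by simp
    also have "exp (-L) = \<delta>" using dl by (simp add: L_def ln_div)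
    finally show ?thesis .
  qed
  have "q \<le> 2 powr 0" unfolding q_def by (intro powr_mono) auto
  hence q01: "0 < q" "q \<le> 1" by (auto simp: q_def)
  have p01: "0 \<le> p" "p \<le> 1" using q01 by (auto simp: p_def)
  have qd: "(1 - p) ^ d = 2 powr (- real d / M)" for d using M q_pow[of M d] by (simp add: p_def q_def)
  show ?thesis
  proof (intro exI[of _ "Alg n p k t"] conjI allI impI)
    show "valid_alg n (Alg n p k t)" by (rule Alg_valid)
    show "\<forall>(Qs, f) \<in> set_pmf (Alg n p k t). real (length Qs) \<le> 129 * (1 / \<epsilon>^2) * log 2 (1 / \<delta>)"
      using Alg_len klen by fastforce
  next
    fix I assume I: "I \<subseteq> {1..n}" and d: "int (card I) < int M"
    let ?r = "(1-p)^card I"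
    have "- real (card I) / M \<ge> -1" using d M by (simp add: field_simps)
    hence "?r \<ge> 2 powr -1" unfolding qd by (intro powr_mono) auto
    hence "t \<le> ?r - \<epsilon>/16" by (simp add: t_def powr_minus)
    moreover have "0 \<le> ?r" "?r \<le> 1" using p01 by (auto intro: power_le_one)
    ultimately have "pmf (map_pmf (\<lambda>c. real c < t * k) (binomial_pmf k ?r)) False \<ge> 1 - exp (- 2 * real k * (\<epsilon>/16)^2)"
      using e by (intro tail_lo k0) auto
    then show "pmf (run_alg (Alg n p k t) I) False \<ge> 1 - \<delta>"
      unfolding run_Alg[OF I p01] using expd by linarith
  next
    fix I assume I: "I \<subseteq> {1..n}" and d: "real (card I) > (1 + \<epsilon>) * real_of_int (int M)"
    let ?r = "(1-p)^card I"
    have "- real (card I) / M \<le> -1 + - \<epsilon>" using d M by (simp add: field_simps)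
    hence "?r \<le> 2 powr (-1 + - \<epsilon>)" unfolding qd by (intro powr_mono) auto
    also have "\<dots> = 2 powr (-1) * 2 powr (-\<epsilon>)" by (rule powr_add)
    also have "\<dots> = (1/2) * 2 powr (-\<epsilon>)" by (simp add: powr_minus)
    also have "\<dots> \<le> (1/2) * (1 - \<epsilon>/4)" using powr_eps[of \<epsilon>] e by simp
    finally have "?r + \<epsilon>/16 \<le> t" by (simp add: t_def)
    moreover have "0 \<le> ?r" "?r \<le> 1" using p01 by (auto intro: power_le_one)
    ultimately have "pmf (map_pmf (\<lambda>c. real c < t * k) (binomial_pmf k ?r)) True \<ge> 1 - exp (- 2 * real k * (\<epsilon>/16)^2)"
      using e by (intro tail_hi k0) auto
    then show "pmf (run_alg (Alg n p k t) I) True \<ge> 1 - \<delta>"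
      unfolding run_Alg[OF I p01] using expd by linarith
  qed
qed

theorem lemma15:
  shows "\<exists>C::real. C > 0 \<and>
    (\<forall>(n::nat) (m::int) (\<epsilon>::real) (\<delta>::real).
      0 < \<epsilon> \<and> \<epsilon> \<le> 1 \<and> 0 < \<delta> \<and> \<delta> < 1 \<longrightarrow>
      (\<exists>A::nonadaptive_alg.
         valid_alg n A \<and>
         (\<forall>(Qs, f) \<in> set_pmf A. real (length Qs) \<le> C * (1 / \<epsilon>^2) * log 2 (1 / \<delta>)) \<and>
         (\<forall>I. I \<subseteq> {1..n} \<longrightarrow>
            (int (card I) < m \<longrightarrow> pmf (run_alg A I) False \<ge> 1 - \<delta>) \<and>
            (real (card I) > (1 + \<epsilon>) * real_of_int m \<longrightarrow> pmf (run_alg A I) True \<ge> 1 - \<delta>))))"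
proof (intro exI[of _ 129] conjI allI impI)
  fix n :: nat and m :: int and \<epsilon> \<delta> :: real
  assume H: "0 < \<epsilon> \<and> \<epsilon> \<le> 1 \<and> 0 < \<delta> \<and> \<delta> < 1"
  hence e: "0 < \<epsilon>" "\<epsilon> \<le> 1" and dl: "0 < \<delta>" "\<delta> < 1" by auto
  have lg0: "0 \<le> 129 * (1 / \<epsilon>^2) * log 2 (1 / \<delta>)" using e dl by simp
  show "\<exists>A::nonadaptive_alg.
         valid_alg n A \<and>
         (\<forall>(Qs, f) \<in> set_pmf A. real (length Qs) \<le> 129 * (1 / \<epsilon>^2) * log 2 (1 / \<delta>)) \<and>
         (\<forall>I. I \<subseteq> {1..n} \<longrightarrow>
            (int (card I) < m \<longrightarrow> pmf (run_alg A I) False \<ge> 1 - \<delta>) \<and>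
            (real (card I) > (1 + \<epsilon>) * real_of_int m \<longrightarrow> pmf (run_alg A I) True \<ge> 1 - \<delta>))"
  proof (cases "m \<le> 0")
    case True
    show ?thesis
    proof (intro exI[of _ "return_pmf ([], \<lambda>_. True)"] conjI allI impI)
      show "valid_alg n (return_pmf ([], \<lambda>_. True))" by (simp add: valid_alg_def)
      show "\<forall>(Qs, f) \<in> set_pmf (return_pmf ([], \<lambda>_. True)). real (length Qs) \<le> 129 * (1 / \<epsilon>^2) * log 2 (1 / \<delta>)"
        using lg0 by simp
    next
      fix I :: "nat set" assume "int (card I) < m" with True show "pmf (run_alg (return_pmf ([], \<lambda>_. True)) I) False \<ge> 1 - \<delta>"
        by simp
    next
      fix I :: "nat set" show "pmf (run_alg (return_pmf ([], \<lambda>_. True)) I) True \<ge> 1 - \<delta>"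
        using dl by (simp add: run_alg_def)
    qed
  next
    case False
    show ?thesis
    proof (cases "\<delta> < 1/2")
      case True
      define M where "M = nat m"
      have M: "m = int M" "M \<ge> 1" using False by (auto simp: M_def)
      show ?thesis using main_alg[OF M(2) e dl(1) True, of n] unfolding M(1) by simp
    next
      case False
      let ?A = "map_pmf (\<lambda>b. ([], \<lambda>_. b)) (bernoulli_pmf (1/2)) :: nonadaptive_alg"
      have r: "run_alg ?A I = bernoulli_pmf (1/2)" for I
        by (simp add: run_alg_def pmf.map_comp o_def)
      show ?thesis
      proof (intro exI[of _ ?A] conjI allI impI)
        show "valid_alg n ?A" by (auto simp: valid_alg_def)
        show "\<forall>(Qs, f) \<in> set_pmf ?A. real (length Qs) \<le> 129 * (1 / \<epsilon>^2) * log 2 (1 / \<delta>)"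
          using lg0 by auto
      qed (use False in \<open>simp_all add: r\<close>)
    qed
  qed
qed (simp)

end
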